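(* Let $S=\{A,B\}$ be a two-element set and let $s,s':I_m\to S$ be mirrored. Then $s=s'$ or $s=\mathrm{rev}\,s'$.
   Context: $\mathscr{T}_m=\{\sigma\in\mathcal{S}_m \mid \exists t:\ \sigma(1)>\cdots>\sigma(t)=1,\ \sigma(t)<\cdots<\sigma(m)\}$, $\mathcal{S}_m$ acting on sequences $s:I_m\to S$ by $\sigma s=s\circ\sigma^{-1}$. $\mathrm{rev}\,s$ is the reversed sequence, $(\mathrm{rev}\,s)(i)=s(m+1-i)$. Two sequences $s,s'$ are mirrored if for every $\sigma\in\mathscr{T}_m$ there is $\sigma'\in\mathscr{T}_m$ with $\sigma s=\sigma's'$, and for every $\tau'\in\mathscr{T}_m$ there is $\tau\in\mathscr{T}_m$ with $\tau's'=\tau s$. *)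

theory Defs
  imports "HOL-Combinatorics.Permutations"
begin

text \<open>Sequences s : I_m -> S with I_m = {1..m} are represented as lists of length m;
  position i (1-based) is the list entry s ! (i - 1).\<close>

definition Tset :: "nat \<Rightarrow> (nat \<Rightarrow> nat) set" where
  "Tset m = {\<sigma>. \<sigma> permutes {1..m} \<and>
     (\<exists>t\<in>{1..m}. \<sigma> t = 1 \<and>
        (\<forall>i j. 1 \<le> i \<and> i < j \<and> j \<le> t \<longrightarrow> \<sigma> i > \<sigma> j) \<and>
        (\<forall>i j. t \<le> i \<and> i < j \<and> j \<le> m \<longrightarrow> \<sigma> i < \<sigma> j))}"

definition act :: "(nat \<Rightarrow> nat) \<Rightarrow> 'a list \<Rightarrow> 'a list" where
  "act \<sigma> s = map (\<lambda>i. s ! (inv \<sigma> i - 1)) [1..<length s + 1]"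

definition mirrored :: "nat \<Rightarrow> 'a list \<Rightarrow> 'a list \<Rightarrow> bool" where
  "mirrored m s s' \<longleftrightarrow>
     (\<forall>\<sigma>\<in>Tset m. \<exists>\<sigma>'\<in>Tset m. act \<sigma> s = act \<sigma>' s') \<and>
     (\<forall>\<tau>'\<in>Tset m. \<exists>\<tau>\<in>Tset m. act \<tau>' s' = act \<tau> s)"

end

theory Submission
  imports Defs
begin

lemma perm_intro:
  fixes p :: "nat \<Rightarrow> nat"
  assumes "\<And>x. x \<notin> {1..n} \<Longrightarrow> p x = x" "\<And>x. x \<in> {1..n} \<Longrightarrow> p x \<in> {1..n}"
    "inj_on p {1..n}"
  shows "p permutes {1..n}"
proof (rule bij_imp_permutes)
  have "p ` {1..n} = {1..n}" by (rule endo_inj_surj) (use assms in auto)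
  then show "bij_betw p {1..n} {1..n}" using assms(3) by (simp add: bij_betw_def)
qed (use assms in auto)

lemma act_length[simp]: "length (act \<sigma> s) = length s"
  by (simp add: act_def del: upt_Suc)

lemma act_nth0: "k < length s \<Longrightarrow> act \<sigma> s ! k = s ! (inv \<sigma> (k+1) - 1)"
  by (simp add: act_def del: upt_Suc)

lemma act_nth:
  assumes "\<sigma> permutes {1..m}" "length s = m" "i \<in> {1..m}"
  shows "act \<sigma> s ! (\<sigma> i - 1) = s ! (i - 1)"
proof -
  have si: "\<sigma> i \<in> {1..m}" using assms(3) permutes_in_image[OF assms(1)] by blast
  then have k: "\<sigma> i - 1 < length s" using assms(2) by auto
  have e: "\<sigma> i - 1 + 1 = \<sigma> i" using si by auto
  have "act \<sigma> s ! (\<sigma> i - 1) = s ! (inv \<sigma> (\<sigma> i - 1 + 1) - 1)" by (rule act_nth0[OF k])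
  also have "\<dots> = s ! (i - 1)" unfolding e permutes_inverses(2)[OF assms(1)] ..
  finally show ?thesis .
qed


lemma act_eq:
  assumes "\<sigma> permutes {1..m}" "length s = m" "length v = m"
    "\<And>i. i \<in> {1..m} \<Longrightarrow> v ! (\<sigma> i - 1) = s ! (i - 1)"
  shows "act \<sigma> s = v"
proof (rule nth_equalityI)
  show "length (act \<sigma> s) = length v" using assms by simp
  fix k assume k: "k < length (act \<sigma> s)"
  define i where "i = inv \<sigma> (k+1)"
  have kin: "k + 1 \<in> {1..m}" using k assms by auto
  have si: "\<sigma> i = k + 1" unfolding i_def by (rule permutes_inverses(1)[OF assms(1)])
  have iin: "i \<in> {1..m}" using kin si permutes_in_image[OF assms(1), of i] by simp
  have "act \<sigma> s ! k = s ! (i - 1)"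
    using k assms unfolding i_def by (simp add: act_nth0)
  also have "\<dots> = v ! (\<sigma> i - 1)" using assms(4)[OF iin] by simp
  finally show "act \<sigma> s ! k = v ! k" using si by simp
qed

inductive popw :: "'a list \<Rightarrow> 'a list \<Rightarrow> bool" where
  popw_Nil: "popw [] []"
| popw_L: "popw xs w \<Longrightarrow> popw (x # xs) (x # w)"
| popw_R: "popw xs w \<Longrightarrow> popw (xs @ [x]) (x # w)"

lemma act_snoc:
  assumes "\<sigma> permutes {1..m}" "length xs = m"
  shows "act \<sigma> (xs @ [x]) = act \<sigma> xs @ [x]"
proof (rule act_eq[of _ "m+1"])
  show "\<sigma> permutes {1..m+1}" using assms(1) by (rule permutes_subset) auto
  fix i assume i: "i \<in> {1..m+1}"
  show "(act \<sigma> xs @ [x]) ! (\<sigma> i - 1) = (xs @ [x]) ! (i - 1)"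
  proof (cases "i = m+1")
    case True
    then have "\<sigma> i = i" using permutes_not_in[OF assms(1)] by simp
    then show ?thesis using True assms by (simp add: nth_append)
  next
    case False
    then have i': "i \<in> {1..m}" using i by auto
    then have "\<sigma> i \<in> {1..m}" using permutes_in_image[OF assms(1)] by simp
    then show ?thesis using act_nth[OF assms i'] i' assms by (auto simp: nth_append)
  qed
qed (use assms in auto)

lemma act_cons:
  assumes "\<sigma> permutes {1..m+1}" "\<sigma> 1 = m+1" "length xs = m"
    "\<sigma>1 permutes {1..m}" "\<And>i. i \<in> {1..m} \<Longrightarrow> \<sigma>1 i = \<sigma> (i+1)"
  shows "act \<sigma> (x # xs) = act \<sigma>1 xs @ [x]"
proof (rule act_eq[OF assms(1)])
  fix i assume i: "i \<in> {1..m+1}"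
  show "(act \<sigma>1 xs @ [x]) ! (\<sigma> i - 1) = (x # xs) ! (i - 1)"
  proof (cases "i = 1")
    case True
    then show ?thesis using assms by (simp add: nth_append)
  next
    case False
    then have i': "i - 1 \<in> {1..m}" using i by auto
    have e: "\<sigma> i = \<sigma>1 (i - 1)" using assms(5)[OF i'] False i by simp
    have r: "\<sigma>1 (i-1) \<in> {1..m}" using permutes_in_image[OF assms(4)] i' by simp
    then have k: "\<sigma>1 (i-1) - 1 < length (act \<sigma>1 xs)" using assms(3) by auto
    have "(act \<sigma>1 xs @ [x]) ! (\<sigma> i - 1) = act \<sigma>1 xs ! (\<sigma>1 (i-1) - 1)"
      unfolding e using k by (simp only: nth_append if_True)
    also have "\<dots> = xs ! (i - 1 - 1)" by (rule act_nth[OF assms(4) assms(3) i'])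
    also have "\<dots> = (x # xs) ! (i - 1)" using i' by (cases "i - 1") auto
    finally show ?thesis .
  qed
qed (use assms in auto)

lemma Tset_E:
  assumes "\<sigma> \<in> Tset n"
  obtains t where "\<sigma> permutes {1..n}" "t \<in> {1..n}" "\<sigma> t = 1"
    "\<And>i j. 1 \<le> i \<Longrightarrow> i < j \<Longrightarrow> j \<le> t \<Longrightarrow> \<sigma> i > \<sigma> j"
    "\<And>i j. t \<le> i \<Longrightarrow> i < j \<Longrightarrow> j \<le> n \<Longrightarrow> \<sigma> i < \<sigma> j"
  using assms unfolding Tset_def by blast

lemma Tset_I:
  assumes "\<sigma> permutes {1..n}" "t \<in> {1..n}" "\<sigma> t = 1"
    "\<And>i j. 1 \<le> i \<Longrightarrow> i < j \<Longrightarrow> j \<le> t \<Longrightarrow> \<sigma> i > \<sigma> j"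
    "\<And>i j. t \<le> i \<Longrightarrow> i < j \<Longrightarrow> j \<le> n \<Longrightarrow> \<sigma> i < \<sigma> j"
  shows "\<sigma> \<in> Tset n"
  using assms unfolding Tset_def by blast

lemma Tset_max:
  assumes "\<sigma> \<in> Tset n"
  shows "\<sigma> 1 = n \<or> \<sigma> n = n"
proof -
  obtain t where p: "\<sigma> permutes {1..n}" and t: "t \<in> {1..n}" "\<sigma> t = 1"
    and L: "\<And>i j. 1 \<le> i \<Longrightarrow> i < j \<Longrightarrow> j \<le> t \<Longrightarrow> \<sigma> i > \<sigma> j"
    and R: "\<And>i j. t \<le> i \<Longrightarrow> i < j \<Longrightarrow> j \<le> n \<Longrightarrow> \<sigma> i < \<sigma> j"
    by (rule Tset_E[OF assms(1)]) blast
  have "n \<in> \<sigma> ` {1..n}" using permutes_image[OF p] t by auto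
  then obtain k where k: "k \<in> {1..n}" "\<sigma> k = n" by auto
  have b1: "\<sigma> 1 \<le> n" using permutes_in_image[OF p, of 1] t by auto
  have bn: "\<sigma> n \<le> n" using permutes_in_image[OF p, of n] t by auto
  show ?thesis
  proof (rule ccontr)
    assume *: "\<not> ?thesis"
    then have k1: "k \<noteq> 1" and kn: "k \<noteq> n" using k by auto
    show False
    proof (cases "k \<le> t")
      case True
      have "1 < k" using k1 k by auto
      then have "\<sigma> 1 > \<sigma> k" using L[of 1 k] True by simp
      then show False using b1 k by simp
    next
      case False
      have "k < n" using kn k by auto
      then have "\<sigma> n > \<sigma> k" using R[of k n] False by simp
      then show False using bn k by simp
    qed
  qed
qed

lemma Tset_restrict:
  assumes "\<sigma> \<in> Tset (Suc m)" "\<sigma> (Suc m) = Suc m" "m \<ge> 1"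
  shows "\<sigma> \<in> Tset m" "\<sigma> permutes {1..m}"
proof -
  obtain t where p: "\<sigma> permutes {1..Suc m}" and t: "t \<in> {1..Suc m}" "\<sigma> t = 1"
    and L: "\<And>i j. 1 \<le> i \<Longrightarrow> i < j \<Longrightarrow> j \<le> t \<Longrightarrow> \<sigma> i > \<sigma> j"
    and R: "\<And>i j. t \<le> i \<Longrightarrow> i < j \<Longrightarrow> j \<le> Suc m \<Longrightarrow> \<sigma> i < \<sigma> j"
    by (rule Tset_E[OF assms(1)]) blast
  show pm: "\<sigma> permutes {1..m}"
  proof (rule perm_intro)
    show "\<sigma> x = x" if "x \<notin> {1..m}" for x
      using that assms(2) permutes_not_in[OF p, of x] by (cases "x = Suc m") auto
    show "\<sigma> x \<in> {1..m}" if "x \<in> {1..m}" for x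
    proof -
      have "\<sigma> x \<in> {1..Suc m}" using that permutes_in_image[OF p] by auto
      moreover have "\<sigma> x \<noteq> Suc m" using assms(2) permutes_inj[OF p] that
        by (metis atLeastAtMost_iff injD Suc_n_not_le_n)
      ultimately show ?thesis by auto
    qed
    show "inj_on \<sigma> {1..m}" using permutes_inj_on[OF p] .
  qed
  have "t \<noteq> Suc m" using t assms by auto
  then show "\<sigma> \<in> Tset m"
    by (intro Tset_I[OF pm, of t]) (use t L R in auto)
qed

lemma Tset_shift:
  assumes "\<sigma> \<in> Tset (Suc m)" "\<sigma> 1 = Suc m" "m \<ge> 1"
  defines "\<sigma>1 \<equiv> \<lambda>i. if i \<in> {1..m} then \<sigma> (i+1) else i"
  shows "\<sigma>1 \<in> Tset m" "\<sigma>1 permutes {1..m}"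
proof -
  obtain t where p: "\<sigma> permutes {1..Suc m}" and t: "t \<in> {1..Suc m}" "\<sigma> t = 1"
    and L: "\<And>i j. 1 \<le> i \<Longrightarrow> i < j \<Longrightarrow> j \<le> t \<Longrightarrow> \<sigma> i > \<sigma> j"
    and R: "\<And>i j. t \<le> i \<Longrightarrow> i < j \<Longrightarrow> j \<le> Suc m \<Longrightarrow> \<sigma> i < \<sigma> j"
    by (rule Tset_E[OF assms(1)]) blast
  have inj: "inj \<sigma>" by (rule permutes_inj[OF p])
  have s1: "\<sigma>1 i = \<sigma> (i+1)" if "i \<in> {1..m}" for i using that unfolding \<sigma>1_def by simp
  show pm: "\<sigma>1 permutes {1..m}"
  proof (rule perm_intro)
    show "\<sigma>1 x = x" if "x \<notin> {1..m}" for x using that unfolding \<sigma>1_def by auto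
    show "\<sigma>1 x \<in> {1..m}" if x: "x \<in> {1..m}" for x
    proof -
      have "x + 1 \<in> {1..Suc m}" using x by simp
      then have a: "\<sigma> (x+1) \<in> {1..Suc m}" using permutes_in_image[OF p] by blast
      have "\<sigma> (x+1) \<noteq> \<sigma> 1" using inj x by (auto dest: injD)
      then have "\<sigma> (x+1) \<noteq> Suc m" using assms(2) by simp
      then show ?thesis using a s1[OF x] by simp
    qed
    show "inj_on \<sigma>1 {1..m}"
    proof (rule inj_onI)
      fix x y assume "x \<in> {1..m}" "y \<in> {1..m}" "\<sigma>1 x = \<sigma>1 y"
      then have "\<sigma> (x+1) = \<sigma> (y+1)" using s1 by simp
      then show "x = y" using inj by (auto dest: injD)
    qed
  qed
  have "t \<noteq> 1" using t assms(2,3) by auto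
  then have t1: "t - 1 \<in> {1..m}" using t by auto
  have t1': "\<sigma>1 (t-1) = 1" using s1[OF t1] \<open>t \<noteq> 1\<close> t by simp
  show "\<sigma>1 \<in> Tset m"
  proof (rule Tset_I[OF pm t1 t1'])
    fix i j assume a: "1 \<le> i" "i < j" "j \<le> t - 1"
    have "i \<in> {1..m}" "j \<in> {1..m}" using a t1 by auto
    moreover have "\<sigma> (i+1) > \<sigma> (j+1)" using L[of "i+1" "j+1"] a by simp
    ultimately show "\<sigma>1 i > \<sigma>1 j" using s1 by simp
  next
    fix i j assume a: "t - 1 \<le> i" "i < j" "j \<le> m"
    have "i \<in> {1..m}" "j \<in> {1..m}" using a t1 by auto
    moreover have "\<sigma> (i+1) < \<sigma> (j+1)" using R[of "i+1" "j+1"] a t1 by simp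
    ultimately show "\<sigma>1 i < \<sigma>1 j" using s1 by simp
  qed
qed

lemma popw_refl: "popw s s"
  by (induction s) (auto intro: popw.intros)

lemma B1: "\<sigma> \<in> Tset n \<Longrightarrow> length s = n \<Longrightarrow> popw s (rev (act \<sigma> s))"
proof (induction n arbitrary: \<sigma> s)
  case 0
  then show ?case by (auto simp: Tset_def)
next
  case (Suc m)
  show ?case
  proof (cases "m = 0")
    case True
    then obtain x where s: "s = [x]" using Suc.prems by (cases s) auto
    have p: "\<sigma> permutes {1..1}" using Suc.prems True by (auto simp: Tset_def)
    have "\<sigma> 1 \<in> {1..1}" using permutes_in_image[OF p] by simp
    then have "act \<sigma> s = [x]" using s by (intro act_eq[OF p]) auto
    then show ?thesis using s by (simp add: popw_refl)
  next
    case False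
    then have m1: "m \<ge> 1" by simp
    from Tset_max[OF Suc.prems(1)] show ?thesis
    proof
      assume a: "\<sigma> 1 = Suc m"
      define \<sigma>1 where "\<sigma>1 = (\<lambda>i. if i \<in> {1..m} then \<sigma> (i+1) else i)"
      obtain x xs where s: "s = x # xs" using Suc.prems by (cases s) auto
      have "act \<sigma> s = act \<sigma>1 xs @ [x]" unfolding s
        by (rule act_cons) (use Suc.prems a s Tset_shift[OF Suc.prems(1) a m1] in
          \<open>auto simp: \<sigma>1_def Tset_def\<close>)
      moreover have "popw xs (rev (act \<sigma>1 xs))"
        using Suc.IH[OF Tset_shift(1)[OF Suc.prems(1) a m1]] Suc.prems s by (simp add: \<sigma>1_def)
      ultimately show ?thesis using s by (simp add: popw_L)
    next
      assume a: "\<sigma> (Suc m) = Suc m"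
      obtain x xs where s: "s = xs @ [x]" using Suc.prems by (cases s rule: rev_cases) auto
      have "act \<sigma> s = act \<sigma> xs @ [x]" unfolding s
        by (rule act_snoc[OF Tset_restrict(2)[OF Suc.prems(1) a m1]]) (use Suc.prems s in auto)
      moreover have "popw xs (rev (act \<sigma> xs))"
        using Suc.IH[OF Tset_restrict(1)[OF Suc.prems(1) a m1]] Suc.prems s by simp
      ultimately show ?thesis using s by (simp add: popw_R)
    qed
  qed
qed

inductive_cases popw_NilE: "popw [] w"

lemma id_Tset1: "id \<in> Tset 1"
  by (rule Tset_I[of _ _ 1]) (auto simp: permutes_id)

lemma act_id1: "act id [x] = [x]"
  by (rule act_eq[of _ 1]) (auto simp: permutes_id)

lemma Tset_extend_R:
  assumes "\<sigma> \<in> Tset m"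
  shows "\<sigma> \<in> Tset (Suc m)"
proof -
  obtain t where p: "\<sigma> permutes {1..m}" and t: "t \<in> {1..m}" "\<sigma> t = 1"
    and L: "\<And>i j. 1 \<le> i \<Longrightarrow> i < j \<Longrightarrow> j \<le> t \<Longrightarrow> \<sigma> i > \<sigma> j"
    and R: "\<And>i j. t \<le> i \<Longrightarrow> i < j \<Longrightarrow> j \<le> m \<Longrightarrow> \<sigma> i < \<sigma> j"
    by (rule Tset_E[OF assms(1)]) blast
  have p': "\<sigma> permutes {1..Suc m}" using p by (rule permutes_subset) auto
  show ?thesis
  proof (rule Tset_I[OF p', of t])
    fix i j assume a: "t \<le> i" "i < j" "j \<le> Suc m"
    show "\<sigma> i < \<sigma> j"
    proof (cases "j = Suc m")
      case True
      then have "\<sigma> j = Suc m" using permutes_not_in[OF p] by simp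
      moreover have "\<sigma> i \<in> {1..m}" using permutes_in_image[OF p] a t True by auto
      ultimately show ?thesis by auto
    qed (use a R in auto)
  qed (use t L in auto)
qed

lemma Tset_extend_L:
  assumes "\<sigma>0 \<in> Tset m"
  defines "\<sigma> \<equiv> \<lambda>i. if i = 1 then Suc m else if i \<in> {2..Suc m} then \<sigma>0 (i - 1) else i"
  shows "\<sigma> \<in> Tset (Suc m)" "\<sigma> permutes {1..Suc m}"
proof -
  obtain t where p: "\<sigma>0 permutes {1..m}" and t: "t \<in> {1..m}" "\<sigma>0 t = 1"
    and L: "\<And>i j. 1 \<le> i \<Longrightarrow> i < j \<Longrightarrow> j \<le> t \<Longrightarrow> \<sigma>0 i > \<sigma>0 j"
    and R: "\<And>i j. t \<le> i \<Longrightarrow> i < j \<Longrightarrow> j \<le> m \<Longrightarrow> \<sigma>0 i < \<sigma>0 j"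
    by (rule Tset_E[OF assms(1)]) blast
  have img: "\<sigma>0 i \<in> {1..m}" if "i \<in> {1..m}" for i using permutes_in_image[OF p] that by auto
  have inj0: "inj \<sigma>0" by (rule permutes_inj[OF p])
  show pm: "\<sigma> permutes {1..Suc m}"
  proof (rule perm_intro)
    show "\<sigma> x = x" if "x \<notin> {1..Suc m}" for x using that unfolding \<sigma>_def by auto
    show "\<sigma> x \<in> {1..Suc m}" if "x \<in> {1..Suc m}" for x
    proof (cases "x = 1")
      case False
      then have "x - 1 \<in> {1..m}" using that by auto
      then show ?thesis using img[of "x - 1"] False that unfolding \<sigma>_def by auto
    qed (auto simp: \<sigma>_def)
    show "inj_on \<sigma> {1..Suc m}"
    proof (rule inj_onI)
      fix x y assume xy: "x \<in> {1..Suc m}" "y \<in> {1..Suc m}" "\<sigma> x = \<sigma> y"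
      show "x = y"
      proof (cases "x = 1 \<or> y = 1")
        case True
        have bnd: "\<sigma> z \<le> m" if "z \<in> {1..Suc m}" "z \<noteq> 1" for z
        proof -
          have "z - 1 \<in> {1..m}" using that by auto
          then show ?thesis using img[of "z - 1"] that unfolding \<sigma>_def by auto
        qed
        have "\<sigma> 1 = Suc m" unfolding \<sigma>_def by simp
        then show ?thesis using True xy bnd[of x] bnd[of y] by (cases "x = 1"; cases "y = 1") auto
      next
        case False
        then have "\<sigma>0 (x - 1) = \<sigma>0 (y - 1)" using xy unfolding \<sigma>_def by auto
        then have "x - 1 = y - 1" using inj0 by (auto dest: injD)
        then show ?thesis using False xy by auto
      qed
    qed
  qed
  show "\<sigma> \<in> Tset (Suc m)"
  proof (rule Tset_I[OF pm, of "Suc t"])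
    show "Suc t \<in> {1..Suc m}" using t by auto
    show "\<sigma> (Suc t) = 1" using t unfolding \<sigma>_def by auto
  next
    fix i j assume a: "1 \<le> i" "i < j" "j \<le> Suc t"
    show "\<sigma> i > \<sigma> j"
    proof (cases "i = 1")
      case True
      have "j - 1 \<in> {1..m}" using a t True by auto
      then show ?thesis using a img[of "j - 1"] t True unfolding \<sigma>_def by auto
    next
      case False
      then show ?thesis using a L[of "i - 1" "j - 1"] t unfolding \<sigma>_def by auto
    qed
  next
    fix i j assume a: "Suc t \<le> i" "i < j" "j \<le> Suc m"
    then show "\<sigma> i < \<sigma> j" using R[of "i - 1" "j - 1"] t unfolding \<sigma>_def by auto
  qed
qed

lemma ex1: "\<exists>\<sigma>\<in>Tset (length [x]). act \<sigma> [x] = [x]"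
proof (rule bexI[of _ id])
  show "act id [x] = [x]" by (rule act_id1)
  show "id \<in> Tset (length [x])" using id_Tset1 by (metis One_nat_def length_Cons list.size(3))
qed

lemma B2: "popw s w \<Longrightarrow> s \<noteq> [] \<Longrightarrow> \<exists>\<sigma>\<in>Tset (length s). act \<sigma> s = rev w"
proof (induction rule: popw.induct)
  case popw_Nil
  then show ?case by simp
next
  case (popw_L xs w x)
  show ?case
  proof (cases "xs = []")
    case True
    then have "w = []" using popw_L.hyps by (auto elim: popw_NilE)
    then show ?thesis using True ex1[of x] by simp
  next
    case False
    then obtain \<sigma>0 where s0: "\<sigma>0 \<in> Tset (length xs)" "act \<sigma>0 xs = rev w" using popw_L.IH by blast
    define m where "m = length xs"
    define \<sigma> where "\<sigma> = (\<lambda>i. if i = 1 then Suc m else if i \<in> {2..Suc m} then \<sigma>0 (i - 1) else i)"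
    have T: "\<sigma> \<in> Tset (Suc m)" "\<sigma> permutes {1..Suc m}"
      using Tset_extend_L[of \<sigma>0 m] s0 unfolding \<sigma>_def m_def by auto
    have p0: "\<sigma>0 permutes {1..m}" using s0 unfolding m_def Tset_def by auto
    have "act \<sigma> (x # xs) = act \<sigma>0 xs @ [x]"
      by (rule act_cons[of _ m]) (use T p0 in \<open>auto simp: \<sigma>_def m_def\<close>)
    then show ?thesis using T s0 unfolding m_def by auto
  qed
next
  case (popw_R xs w x)
  show ?case
  proof (cases "xs = []")
    case True
    then have "w = []" using popw_R.hyps by (auto elim: popw_NilE)
    then show ?thesis using True ex1[of x] by simp
  next
    case False
    then obtain \<sigma>0 where s0: "\<sigma>0 \<in> Tset (length xs)" "act \<sigma>0 xs = rev w" using popw_R.IH by blast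
    have p0: "\<sigma>0 permutes {1..length xs}" using s0 unfolding Tset_def by auto
    have "act \<sigma>0 (xs @ [x]) = act \<sigma>0 xs @ [x]" by (rule act_snoc[OF p0]) simp
    then show ?thesis using Tset_extend_R[OF s0(1)] s0 by auto
  qed
qed

lemma mirrored_popw0:
  assumes H: "\<And>\<sigma>. \<sigma> \<in> Tset m \<Longrightarrow> \<exists>\<sigma>'\<in>Tset m. act \<sigma>' s' = act \<sigma> s"
    and "length s = m" "length s' = m" "popw s w"
  shows "popw s' w"
proof (cases "s = []")
  case True
  then have "s' = []" "w = []" using assms by (auto elim: popw_NilE)
  then show ?thesis by (simp add: popw_Nil)
next
  case False
  obtain \<sigma> where s1: "\<sigma> \<in> Tset m" "act \<sigma> s = rev w" using B2[OF assms(4) False] assms(2) by blast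
  obtain \<sigma>' where s2: "\<sigma>' \<in> Tset m" "act \<sigma>' s' = act \<sigma> s" using H[OF s1(1)] by blast
  show ?thesis using B1[OF s2(1) assms(3)] s1 s2 by simp
qed

lemma mirrored_popw_iff:
  assumes "mirrored m s s'" "length s = m" "length s' = m"
  shows "popw s w \<longleftrightarrow> popw s' w"
proof
  assume w: "popw s w"
  show "popw s' w"
  proof (rule mirrored_popw0[OF _ assms(2,3) w])
    fix \<sigma> assume "\<sigma> \<in> Tset m"
    then obtain \<sigma>' where "\<sigma>' \<in> Tset m" "act \<sigma> s = act \<sigma>' s'"
      using assms(1) unfolding mirrored_def by blast
    then show "\<exists>\<sigma>'\<in>Tset m. act \<sigma>' s' = act \<sigma> s" by auto
  qed
next
  assume w: "popw s' w"
  show "popw s w"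
  proof (rule mirrored_popw0[OF _ assms(3,2) w])
    fix \<sigma> assume "\<sigma> \<in> Tset m"
    then obtain \<sigma>' where "\<sigma>' \<in> Tset m" "act \<sigma> s' = act \<sigma>' s"
      using assms(1) unfolding mirrored_def by blast
    then show "\<exists>\<sigma>'\<in>Tset m. act \<sigma>' s = act \<sigma> s'" by auto
  qed
qed

inductive_cases popw_ConsE: "popw s (x # w)"

lemma popw_Cons_iff:
  "popw s (x # w) \<longleftrightarrow> (\<exists>t. s = x # t \<and> popw t w) \<or> (\<exists>t. s = t @ [x] \<and> popw t w)"
  by (auto elim: popw_ConsE intro: popw.intros)

lemma popw_rev: "popw s w \<Longrightarrow> popw (rev s) w"
  by (induction rule: popw.induct) (auto intro: popw.intros)

lemma popw_rev_iff: "popw (rev s) w \<longleftrightarrow> popw s w"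
  using popw_rev[of s w] popw_rev[of "rev s" w] by auto

lemma popw_mset: "popw s w \<Longrightarrow> mset w = mset s"
  by (induction rule: popw.induct) auto

lemma SL_L:
  assumes "mid \<noteq> []" "hd mid \<noteq> X"
  shows "(X # t = replicate a X @ mid @ replicate b X) \<longleftrightarrow>
         (a \<ge> 1 \<and> t = replicate (a-1) X @ mid @ replicate b X)"
  using assms by (cases a; cases mid) auto

lemma SL_R:
  assumes "mid \<noteq> []" "last mid \<noteq> X"
  shows "(t @ [X] = replicate a X @ mid @ replicate b X) \<longleftrightarrow>
         (b \<ge> 1 \<and> t = replicate a X @ mid @ replicate (b-1) X)"
proof (cases b)
  case 0
  have "last (replicate a X @ mid) \<noteq> X" using assms by simp
  then show ?thesis using 0 by (metis append.right_neutral last_snoc not_one_le_zero replicate_0)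
next
  case (Suc b')
  have "replicate b X = replicate b' X @ [X]" using Suc by (simp add: replicate_append_same)
  then show ?thesis using Suc by simp
qed

lemma SL_LY:
  assumes "mid \<noteq> []" "hd mid = Y" "X \<noteq> Y"
  shows "(Y # t = replicate a X @ mid @ replicate b X) \<longleftrightarrow> (a = 0 \<and> t = tl mid @ replicate b X)"
  using assms by (cases a; cases mid) auto

lemma SL_RY:
  assumes "mid \<noteq> []" "last mid = Y" "X \<noteq> Y"
  shows "(t @ [Y] = replicate a X @ mid @ replicate b X) \<longleftrightarrow> (b = 0 \<and> t = replicate a X @ butlast mid)"
proof (cases b)
  case 0
  have "mid = butlast mid @ [Y]" using assms by (metis append_butlast_last_id)
  then have e: "replicate a X @ mid @ replicate b X = (replicate a X @ butlast mid) @ [Y]" using 0 by simp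
  show ?thesis unfolding e using 0 by auto
next
  case (Suc b')
  have "replicate b X = replicate b' X @ [X]" using Suc by (simp add: replicate_append_same)
  then show ?thesis using Suc assms by auto
qed

lemma popL:
  assumes "mid \<noteq> []" "hd mid \<noteq> X"
  shows "(\<exists>t. replicate a X @ mid @ replicate b X = X # t \<and> popw t v) \<longleftrightarrow>
         (a \<ge> 1 \<and> popw (replicate (a-1) X @ mid @ replicate b X) v)"
  using assms by (cases a; cases mid) auto

lemma popR:
  assumes "mid \<noteq> []" "last mid \<noteq> X"
  shows "(\<exists>t. replicate a X @ mid @ replicate b X = t @ [X] \<and> popw t v) \<longleftrightarrow>
         (b \<ge> 1 \<and> popw (replicate a X @ mid @ replicate (b-1) X) v)"
proof -
  have "\<forall>t. (replicate a X @ mid @ replicate b X = t @ [X]) \<longleftrightarrow>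
     (b \<ge> 1 \<and> t = replicate a X @ mid @ replicate (b-1) X)"
    using SL_R[OF assms] by (metis (no_types, lifting))
  then show ?thesis by auto
qed

lemma popLY:
  assumes "mid \<noteq> []" "hd mid = Y" "X \<noteq> Y"
  shows "(\<exists>t. replicate a X @ mid @ replicate b X = Y # t \<and> popw t v) \<longleftrightarrow>
         (a = 0 \<and> popw (tl mid @ replicate b X) v)"
  using assms by (cases a; cases mid) auto

lemma popRY:
  assumes "mid \<noteq> []" "last mid = Y" "X \<noteq> Y"
  shows "(\<exists>t. replicate a X @ mid @ replicate b X = t @ [Y] \<and> popw t v) \<longleftrightarrow>
         (b = 0 \<and> popw (replicate a X @ butlast mid) v)"
proof -
  have "\<forall>t. (replicate a X @ mid @ replicate b X = t @ [Y]) \<longleftrightarrow>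
     (b = 0 \<and> t = replicate a X @ butlast mid)"
    using SL_RY[OF assms] by (metis (no_types, lifting))
  then show ?thesis by auto
qed

lemma L1:
  assumes "mid \<noteq> []" "hd mid \<noteq> X" "last mid \<noteq> X"
  shows "popw (replicate a X @ mid @ replicate b X) (replicate r X @ w) \<longleftrightarrow>
    (\<exists>i j. i \<le> a \<and> j \<le> b \<and> i + j = r \<and> popw (replicate (a-i) X @ mid @ replicate (b-j) X) w)"
proof (induction r arbitrary: a b)
  case 0
  then show ?case by auto
next
  case (Suc r)
  have "popw (replicate a X @ mid @ replicate b X) (replicate (Suc r) X @ w) \<longleftrightarrow>
     (a \<ge> 1 \<and> popw (replicate (a-1) X @ mid @ replicate b X) (replicate r X @ w)) \<or>
     (b \<ge> 1 \<and> popw (replicate a X @ mid @ replicate (b-1) X) (replicate r X @ w))"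
    by (simp only: replicate_Suc append_Cons popw_Cons_iff popL[OF assms(1,2)] popR[OF assms(1,3)])
  also have "\<dots> \<longleftrightarrow> (\<exists>i j. i \<le> a \<and> j \<le> b \<and> i + j = Suc r \<and>
      popw (replicate (a-i) X @ mid @ replicate (b-j) X) w)" (is "?A \<longleftrightarrow> ?B")
  proof
    assume ?A
    then show ?B
    proof
      assume h: "a \<ge> 1 \<and> popw (replicate (a-1) X @ mid @ replicate b X) (replicate r X @ w)"
      then obtain i j where "i \<le> a - 1" "j \<le> b" "i + j = r"
        "popw (replicate (a-1-i) X @ mid @ replicate (b-j) X) w" using Suc.IH by blast
      then show ?B using h by (intro exI[of _ "i+1"] exI[of _ j]) (auto simp: algebra_simps)
    next
      assume h: "b \<ge> 1 \<and> popw (replicate a X @ mid @ replicate (b-1) X) (replicate r X @ w)"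
      then obtain i j where "i \<le> a" "j \<le> b - 1" "i + j = r"
        "popw (replicate (a-i) X @ mid @ replicate (b-1-j) X) w" using Suc.IH by blast
      then show ?B using h by (intro exI[of _ i] exI[of _ "j+1"]) (auto simp: algebra_simps)
    qed
  next
    assume ?B
    then obtain i j where ij: "i \<le> a" "j \<le> b" "i + j = Suc r"
      "popw (replicate (a-i) X @ mid @ replicate (b-j) X) w" by blast
    show ?A
    proof (cases "i \<ge> 1")
      case True
      have "popw (replicate (a-1) X @ mid @ replicate b X) (replicate r X @ w)"
        using Suc.IH[of "a-1" b] ij True by (intro iffD2[OF Suc.IH] exI[of _ "i-1"] exI[of _ j]) auto
      then show ?A using True ij by auto
    next
      case False
      have "popw (replicate a X @ mid @ replicate (b-1) X) (replicate r X @ w)"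
        using ij False by (intro iffD2[OF Suc.IH] exI[of _ i] exI[of _ "j-1"]) auto
      then show ?A using False ij by auto
    qed
  qed
  finally show ?case .
qed

lemma L2:
  assumes "mid \<noteq> []" "hd mid = Y" "last mid = Y" "X \<noteq> Y"
  shows "popw (replicate c X @ mid @ replicate d X) (Y # w) \<longleftrightarrow>
    (c = 0 \<and> popw (tl mid @ replicate d X) w) \<or> (d = 0 \<and> popw (replicate c X @ butlast mid) w)"
  by (simp only: popw_Cons_iff popLY[OF assms(1,2,4)] popRY[OF assms(1,3,4)])

lemma stat:
  assumes "mid \<noteq> []" "hd mid = Y" "last mid = Y" "X \<noteq> Y"
  shows "(\<exists>w. popw (replicate a X @ mid @ replicate b X) (replicate r X @ Y # w)) \<longleftrightarrow>
    (min a b \<le> r \<and> r \<le> a + b)"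
proof -
  have h: "hd mid \<noteq> X" "last mid \<noteq> X" using assms by auto
  have "(\<exists>w. popw (replicate a X @ mid @ replicate b X) (replicate r X @ Y # w)) \<longleftrightarrow>
    (\<exists>w i j. i \<le> a \<and> j \<le> b \<and> i + j = r \<and>
       ((a - i = 0 \<and> popw (tl mid @ replicate (b-j) X) w) \<or> (b - j = 0 \<and> popw (replicate (a-i) X @ butlast mid) w)))"
    by (simp only: L1[OF assms(1) h] L2[OF assms])
  also have "\<dots> \<longleftrightarrow> (\<exists>i j. i \<le> a \<and> j \<le> b \<and> i + j = r \<and> (a - i = 0 \<or> b - j = 0))"
    using popw_refl by blast
  also have "\<dots> \<longleftrightarrow> (min a b \<le> r \<and> r \<le> a + b)"
  proof
    assume "\<exists>i j. i \<le> a \<and> j \<le> b \<and> i + j = r \<and> (a - i = 0 \<or> b - j = 0)"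
    then show "min a b \<le> r \<and> r \<le> a + b" by auto
  next
    assume r: "min a b \<le> r \<and> r \<le> a + b"
    show "\<exists>i j. i \<le> a \<and> j \<le> b \<and> i + j = r \<and> (a - i = 0 \<or> b - j = 0)"
    proof (cases "a \<le> r")
      case True
      then show ?thesis using r by (intro exI[of _ a] exI[of _ "r - a"]) auto
    next
      case False
      then show ?thesis using r by (intro exI[of _ "r - b"] exI[of _ b]) auto
    qed
  qed
  finally show ?thesis .
qed

lemma midlemma:
  assumes "mid \<noteq> []" "hd mid \<noteq> X" "last mid \<noteq> X"
  shows "popw (replicate a X @ mid @ replicate b X) (replicate (a+b) X @ w) \<longleftrightarrow> popw mid w"
proof -
  have "(\<exists>i j. i \<le> a \<and> j \<le> b \<and> i + j = a + b \<and> popw (replicate (a-i) X @ mid @ replicate (b-j) X) w)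
     \<longleftrightarrow> popw mid w"
  proof
    assume "\<exists>i j. i \<le> a \<and> j \<le> b \<and> i + j = a + b \<and> popw (replicate (a-i) X @ mid @ replicate (b-j) X) w"
    then obtain i j where "i \<le> a" "j \<le> b" "i + j = a + b" "popw (replicate (a-i) X @ mid @ replicate (b-j) X) w"
      by blast
    moreover have "i = a" "j = b" using calculation by auto
    ultimately show "popw mid w" by simp
  next
    assume "popw mid w"
    then show "\<exists>i j. i \<le> a \<and> j \<le> b \<and> i + j = a + b \<and> popw (replicate (a-i) X @ mid @ replicate (b-j) X) w"
      by (intro exI[of _ a] exI[of _ b]) simp
  qed
  then show ?thesis using L1[OF assms] by simp
qed

lemma D2:
  assumes "a < b" "X \<noteq> Y" and True: "last (Y # z) = Y"
  shows "popw (replicate a X @ (Y # z) @ replicate b X) (replicate a X @ Y # w) \<longleftrightarrow>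
         popw (z @ replicate b X) w"
proof -
  let ?mid = "Y # z"
  have m: "?mid \<noteq> []" "hd ?mid \<noteq> X" "hd ?mid = Y" using assms by auto
  have h: "last ?mid \<noteq> X" using True assms by simp
    have "popw (replicate a X @ ?mid @ replicate b X) (replicate a X @ Y # w) \<longleftrightarrow>
      (\<exists>i j. i \<le> a \<and> j \<le> b \<and> i + j = a \<and>
       ((a - i = 0 \<and> popw (tl ?mid @ replicate (b-j) X) w) \<or> (b - j = 0 \<and> popw (replicate (a-i) X @ butlast ?mid) w)))"
      by (simp only: L1[OF m(1,2) h] L2[OF m(1,3) True assms(2)])
    also have "\<dots> \<longleftrightarrow> popw (z @ replicate b X) w"
    proof
      assume "\<exists>i j. i \<le> a \<and> j \<le> b \<and> i + j = a \<and>
       ((a - i = 0 \<and> popw (tl ?mid @ replicate (b-j) X) w) \<or> (b - j = 0 \<and> popw (replicate (a-i) X @ butlast ?mid) w))"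
      then obtain i j where ij: "i \<le> a" "j \<le> b" "i + j = a" and
        d: "(a - i = 0 \<and> popw (tl ?mid @ replicate (b-j) X) w) \<or> (b - j = 0 \<and> popw (replicate (a-i) X @ butlast ?mid) w)"
        by blast
      have "b - j \<noteq> 0" using ij assms by auto
      then have "a - i = 0" "popw (tl ?mid @ replicate (b-j) X) w" using d by auto
      moreover then have "j = 0" using ij by auto
      ultimately show "popw (z @ replicate b X) w" by simp
    next
      assume "popw (z @ replicate b X) w"
      then show "\<exists>i j. i \<le> a \<and> j \<le> b \<and> i + j = a \<and>
       ((a - i = 0 \<and> popw (tl ?mid @ replicate (b-j) X) w) \<or> (b - j = 0 \<and> popw (replicate (a-i) X @ butlast ?mid) w))"
        by (intro exI[of _ a] exI[of _ 0]) simp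
    qed
    finally show ?thesis .
qed

lemma decL:
  assumes "Y \<in> set l" "set l \<subseteq> {X, Y}"
  shows "\<exists>a r. l = replicate a X @ r \<and> r \<noteq> [] \<and> hd r = Y"
  using assms
proof (induction l)
  case Nil
  then show ?case by simp
next
  case (Cons c l)
  show ?case
  proof (cases "c = Y")
    case True
    then show ?thesis by (intro exI[of _ 0] exI[of _ "c # l"]) simp
  next
    case False
    then have "c = X" "Y \<in> set l" "set l \<subseteq> {X,Y}" using Cons.prems by auto
    then obtain a r where "l = replicate a X @ r" "r \<noteq> []" "hd r = Y" using Cons.IH by blast
    then show ?thesis using \<open>c = X\<close> by (intro exI[of _ "Suc a"] exI[of _ r]) simp
  qed
qed

lemma decomp:
  assumes "Y \<in> set l" "set l \<subseteq> {X, Y}"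
  shows "\<exists>a mid b. l = replicate a X @ mid @ replicate b X \<and> mid \<noteq> [] \<and> hd mid = Y \<and> last mid = Y"
proof -
  obtain a r where r: "l = replicate a X @ r" "r \<noteq> []" "hd r = Y" using decL[OF assms] by blast
  have y: "Y \<in> set (rev r)" using r by (cases r) auto
  have s: "set (rev r) \<subseteq> {X, Y}" using r(1) assms(2) by auto
  obtain b q where q: "rev r = replicate b X @ q" "q \<noteq> []" "hd q = Y" using decL[OF y s] by blast
  have "r = rev (rev r)" by simp
  also have "\<dots> = rev (replicate b X @ q)" using q(1) by simp
  also have "\<dots> = rev q @ replicate b X" by simp
  finally have rr: "r = rev q @ replicate b X" .
  have "hd (rev q) = Y" using rr r q by (simp add: hd_append)
  moreover have "last (rev q) = Y" using q by (simp add: last_rev)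
  ultimately show ?thesis using r rr q by (intro exI[of _ a] exI[of _ "rev q"] exI[of _ b]) auto
qed

lemma PAL:
  "u @ Y # replicate b X = replicate b X @ Y # u \<Longrightarrow> rev u = u"
proof (induction "length u" arbitrary: u rule: less_induct)
  case less
  show ?case
  proof (cases "length u \<le> b")
    case True
    have "take (length u) (u @ Y # replicate b X) = take (length u) (replicate b X @ Y # u)"
      using less.prems by simp
    then have "u = replicate (length u) X" using True by simp
    then show ?thesis by (metis rev_replicate)
  next
    case False
    define y where "y = drop (Suc b) u"
    have "take (Suc b) (u @ Y # replicate b X) = take (Suc b) (replicate b X @ Y # u)"
      using less.prems by simp
    then have t: "take (Suc b) u = replicate b X @ [Y]" using False by simp
    have "u = take (Suc b) u @ drop (Suc b) u" by simp
    then have u1: "u = replicate b X @ Y # y" unfolding y_def t by simp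
    have "drop (Suc b) (u @ Y # replicate b X) = drop (Suc b) (replicate b X @ Y # u)"
      using less.prems by simp
    then have u2: "u = y @ Y # replicate b X" using False unfolding y_def by simp
    have "y @ Y # replicate b X = replicate b X @ Y # y" using u1 u2 by simp
    moreover have "length y < length u" using u1 by simp
    ultimately have "rev y = y" using less.hyps by blast
    have "rev u = rev (y @ Y # replicate b X)" using u2 by simp
    also have "\<dots> = replicate b X @ Y # rev y" by simp
    also have "\<dots> = u" using u1 \<open>rev y = y\<close> by simp
    finally show ?thesis .
  qed
qed

lemma SUB:
  assumes IH: "\<And>t t'. length t < n \<Longrightarrow> set t \<subseteq> {X,Y} \<Longrightarrow> set t' \<subseteq> {X,Y} \<Longrightarrow>
                 (\<And>w. popw t w \<longleftrightarrow> popw t' w) \<Longrightarrow> t = t' \<or> t = rev t'"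
    and XY: "X \<noteq> Y" and mid: "mid \<noteq> []" "hd mid = Y" "last mid = Y" "set mid \<subseteq> {X,Y}"
    and ab: "a < b" and len: "length (replicate a X @ mid @ replicate b X) \<le> n"
    and P: "\<And>w. popw (replicate a X @ mid @ replicate b X) w \<longleftrightarrow>
               popw (replicate a X @ rev mid @ replicate b X) w"
  shows "rev mid = mid"
proof -
  obtain z where mz: "mid = Y # z" using mid by (cases mid) auto
  show ?thesis
  proof (cases "z = []")
    case True
    then show ?thesis using mz by simp
  next
    case False
    have "last z = Y" using mid mz False by simp
    then have "z = butlast z @ [Y]" using False by (metis append_butlast_last_id)
    then obtain z0 where z0: "z = z0 @ [Y]" by blast
    define z' where "z' = rev z0 @ [Y]"
    have rm: "rev mid = Y # z'" unfolding z'_def using mz z0 by simp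
    have l1: "last (Y # z) = Y" using z0 by simp
    have l2: "last (Y # z') = Y" unfolding z'_def by simp
    have Q: "popw (z @ replicate b X) w \<longleftrightarrow> popw (z' @ replicate b X) w" for w
    proof -
      have "popw (z @ replicate b X) w \<longleftrightarrow>
            popw (replicate a X @ (Y # z) @ replicate b X) (replicate a X @ Y # w)"
        using D2[OF ab XY l1] by simp
      also have "\<dots> \<longleftrightarrow> popw (replicate a X @ (Y # z') @ replicate b X) (replicate a X @ Y # w)"
        unfolding mz[symmetric] rm[symmetric] by (rule P)
      also have "\<dots> \<longleftrightarrow> popw (z' @ replicate b X) w"
        using D2[OF ab XY l2] by simp
      finally show ?thesis .
    qed
    have lt: "length (z @ replicate b X) < n" using len mz by simp
    have s1: "set (z @ replicate b X) \<subseteq> {X,Y}" using mid(4) mz by auto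
    have s2: "set (z' @ replicate b X) \<subseteq> {X,Y}" using mid(4) mz z0 unfolding z'_def by auto
    have "z @ replicate b X = z' @ replicate b X \<or> z @ replicate b X = rev (z' @ replicate b X)"
      using IH[OF lt s1 s2 Q] by blast
    then have "rev z0 = z0"
    proof
      assume "z @ replicate b X = z' @ replicate b X"
      then have "z = z'" by simp
      then show ?thesis using z0 unfolding z'_def by simp
    next
      assume "z @ replicate b X = rev (z' @ replicate b X)"
      then have "z0 @ Y # replicate b X = replicate b X @ Y # z0" using z0 unfolding z'_def by simp
      then show ?thesis by (rule PAL)
    qed
    then show ?thesis using mz z0 by simp
  qed
qed

lemma PALC:
  assumes IH: "\<And>t t'. length t < n \<Longrightarrow> set t \<subseteq> {X,Y} \<Longrightarrow> set t' \<subseteq> {X,Y} \<Longrightarrow>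
                 (\<And>w. popw t w \<longleftrightarrow> popw t' w) \<Longrightarrow> t = t' \<or> t = rev t'"
    and XY: "X \<noteq> Y" and mid: "mid \<noteq> []" "hd mid = Y" "last mid = Y" "set mid \<subseteq> {X,Y}"
    and ab: "a \<noteq> b" and len: "length (replicate a X @ mid @ replicate b X) \<le> n"
    and P: "\<And>w. popw (replicate a X @ mid @ replicate b X) w \<longleftrightarrow>
               popw (replicate a X @ rev mid @ replicate b X) w"
  shows "rev mid = mid"
proof (cases "a < b")
  case True
  then show ?thesis using SUB[OF IH XY mid True len P] by blast
next
  case False
  then have ba: "b < a" using ab by simp
  have mid': "rev mid \<noteq> []" "hd (rev mid) = Y" "last (rev mid) = Y" "set (rev mid) \<subseteq> {X,Y}"
    using mid by (auto simp: hd_rev last_rev)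
  have len': "length (replicate b X @ rev mid @ replicate a X) \<le> n" using len by simp
  have P': "popw (replicate b X @ rev mid @ replicate a X) w \<longleftrightarrow>
               popw (replicate b X @ rev (rev mid) @ replicate a X) w" for w
  proof -
    have "popw (replicate b X @ rev mid @ replicate a X) w \<longleftrightarrow>
          popw (rev (replicate a X @ mid @ replicate b X)) w" by simp
    also have "\<dots> \<longleftrightarrow> popw (replicate a X @ mid @ replicate b X) w" by (rule popw_rev_iff)
    also have "\<dots> \<longleftrightarrow> popw (replicate a X @ rev mid @ replicate b X) w" by (rule P)
    also have "\<dots> \<longleftrightarrow> popw (rev (replicate a X @ rev mid @ replicate b X)) w" by (rule popw_rev_iff[symmetric])
    also have "\<dots> \<longleftrightarrow> popw (replicate b X @ rev (rev mid) @ replicate a X) w" by simp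
    finally show ?thesis .
  qed
  have "rev (rev mid) = rev mid" using SUB[OF IH XY mid' ba len' P'] by blast
  then show ?thesis by simp
qed

lemma popw_mset_eq:
  assumes "\<And>w. popw s w \<longleftrightarrow> popw s' w"
  shows "mset s' = mset s"
proof -
  have "popw s s'" using assms popw_refl by blast
  then show ?thesis by (rule popw_mset)
qed

lemma core:
  assumes IH: "\<And>t t'. length t < length s \<Longrightarrow> set t \<subseteq> {X,Y} \<Longrightarrow> set t' \<subseteq> {X,Y} \<Longrightarrow>
                 (\<And>w. popw t w \<longleftrightarrow> popw t' w) \<Longrightarrow> t = t' \<or> t = rev t'"
    and XY: "X \<noteq> Y" and ss: "set s \<subseteq> {X,Y}" "set s' \<subseteq> {X,Y}"
    and P: "\<And>w. popw s w \<longleftrightarrow> popw s' w" and ne: "s \<noteq> []" "hd s = X"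
  shows "s = s' \<or> s = rev s'"
proof -
  have ms: "mset s' = mset s" using popw_mset_eq P by blast
  then have st: "set s' = set s" by (metis set_mset_mset)
  have ln: "length s' = length s" using ms by (metis size_mset)
  show ?thesis
  proof (cases "Y \<in> set s")
    case False
    then have "\<forall>y\<in>set s. y = X" using ss by auto
    then have e1: "s = replicate (length s) X" by (simp add: replicate_length_same)
    have "\<forall>y\<in>set s'. y = X" using st \<open>\<forall>y\<in>set s. y = X\<close> by simp
    then have "s' = replicate (length s') X" by (simp add: replicate_length_same)
    then show ?thesis using e1 ln by simp
  next
    case True
    obtain a mid b where d: "s = replicate a X @ mid @ replicate b X" "mid \<noteq> []" "hd mid = Y" "last mid = Y"
      using decomp[OF True ss(1)] by blast
    have True': "Y \<in> set s'" using True st by simp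
    obtain a' mid' b' where d': "s' = replicate a' X @ mid' @ replicate b' X" "mid' \<noteq> []" "hd mid' = Y" "last mid' = Y"
      using decomp[OF True' ss(2)] by blast
    have a1: "a \<ge> 1"
    proof (rule ccontr)
      assume "\<not> a \<ge> 1"
      then have "a = 0" by simp
      then have "hd s = Y" using d by (simp add: hd_append)
      then show False using ne XY by simp
    qed
    have stt: "(min a b \<le> r \<and> r \<le> a + b) \<longleftrightarrow> (min a' b' \<le> r \<and> r \<le> a' + b')" for r
    proof -
      have "(min a b \<le> r \<and> r \<le> a + b) \<longleftrightarrow> (\<exists>w. popw s (replicate r X @ Y # w))"
        using stat[OF d(2,3,4) XY] d(1) by simp
      also have "\<dots> \<longleftrightarrow> (\<exists>w. popw s' (replicate r X @ Y # w))" using P by simp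
      also have "\<dots> \<longleftrightarrow> (min a' b' \<le> r \<and> r \<le> a' + b')"
        using stat[OF d'(2,3,4) XY] d'(1) by simp
      finally show ?thesis .
    qed
    have "min a b = min a' b'" "a + b = a' + b'"
      using stt[of "min a b"] stt[of "min a' b'"] stt[of "a + b"] stt[of "a' + b'"] by auto
    then have ab: "(a' = a \<and> b' = b) \<or> (a' = b \<and> b' = a)" by (auto simp: min_def split: if_splits)
    have sum: "a' + b' = a + b" using \<open>a + b = a' + b'\<close> by simp
    have Pm: "popw mid w \<longleftrightarrow> popw mid' w" for w
    proof -
      have h: "hd mid \<noteq> X" "last mid \<noteq> X" "hd mid' \<noteq> X" "last mid' \<noteq> X" using d d' XY by auto
      have "popw mid w \<longleftrightarrow> popw s (replicate (a+b) X @ w)" using midlemma[OF d(2) h(1,2)] d(1) by simp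
      also have "\<dots> \<longleftrightarrow> popw s' (replicate (a+b) X @ w)" by (rule P)
      also have "\<dots> \<longleftrightarrow> popw mid' w" using midlemma[OF d'(2) h(3,4), of a' b' w] d'(1) sum by simp
      finally show ?thesis .
    qed
    have smid: "set mid \<subseteq> {X,Y}" using ss(1) d(1) by auto
    have smid': "set mid' \<subseteq> {X,Y}" using ss(2) d'(1) by auto
    have lm: "length mid < length s" using d(1) a1 by simp
    have mm: "mid = mid' \<or> mid = rev mid'" using IH[OF lm smid smid' Pm] by blast
    have len: "length (replicate a X @ mid @ replicate b X) \<le> length s" using d(1) by simp
    have mid4: "mid \<noteq> []" "hd mid = Y" "last mid = Y" "set mid \<subseteq> {X,Y}" using d smid by auto
    have revs: "rev s = replicate b X @ rev mid @ replicate a X" using d(1) by simp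
    from ab show ?thesis
    proof
      assume e: "a' = a \<and> b' = b"
      from mm show ?thesis
      proof
        assume "mid = mid'" then show ?thesis using d d' e by simp
      next
        assume "mid = rev mid'"
        then have s'e: "s' = replicate a X @ rev mid @ replicate b X" using d' e by simp
        show ?thesis
        proof (cases "a = b")
          case True
          then have "s' = rev s" using s'e revs by simp
          then show ?thesis by simp
        next
          case False
          have "rev mid = mid"
          proof (rule PALC[OF IH XY mid4 False len])
            fix w
            show "popw (replicate a X @ mid @ replicate b X) w \<longleftrightarrow>
               popw (replicate a X @ rev mid @ replicate b X) w"
              using P[of w] unfolding d(1) s'e .
          qed
          then show ?thesis using s'e d(1) by simp
        qed
      qed
    next
      assume e: "a' = b \<and> b' = a"
      from mm show ?thesis
      proof
        assume "mid = rev mid'"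
        then have "s' = rev s" using d' e revs by simp
        then show ?thesis by simp
      next
        assume "mid = mid'"
        then have rs': "rev s' = replicate a X @ rev mid @ replicate b X" using d' e by simp
        show ?thesis
        proof (cases "a = b")
          case True
          then show ?thesis using d d' e \<open>mid = mid'\<close> by simp
        next
          case False
          have "rev mid = mid"
          proof (rule PALC[OF IH XY mid4 False len])
            fix w
            have "popw (replicate a X @ mid @ replicate b X) w \<longleftrightarrow> popw s' w" using P d(1) by simp
            also have "\<dots> \<longleftrightarrow> popw (rev s') w" by (rule popw_rev_iff[symmetric])
            finally show "popw (replicate a X @ mid @ replicate b X) w \<longleftrightarrow>
               popw (replicate a X @ rev mid @ replicate b X) w" using rs' by simp
          qed
          then have "rev s' = s" using rs' d(1) by simp
          then show ?thesis by auto
        qed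
      qed
    qed
  qed
qed

lemma mainL:
  "X \<noteq> Y \<Longrightarrow> set s \<subseteq> {X,Y} \<Longrightarrow> set s' \<subseteq> {X,Y} \<Longrightarrow> (\<And>w. popw s w \<longleftrightarrow> popw s' w) \<Longrightarrow>
   s = s' \<or> s = rev s'"
proof (induction "length s" arbitrary: s s' X Y rule: less_induct)
  case less
  show ?case
  proof (cases "s = []")
    case True
    have "mset s' = mset s" using popw_mset_eq less.prems(4) by blast
    then show ?thesis using True by simp
  next
    case False
    then have "hd s \<in> set s" by simp
    then have "hd s = X \<or> hd s = Y" using less.prems(2) by auto
    then show ?thesis
    proof
      assume h: "hd s = X"
      show ?thesis
      proof (rule core[OF _ less.prems(1,2,3,4) False h])
        fix t t' assume "length t < length s" "set t \<subseteq> {X,Y}" "set t' \<subseteq> {X,Y}"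
          "\<And>w. popw t w \<longleftrightarrow> popw t' w"
        then show "t = t' \<or> t = rev t'" using less.hyps[of t X Y t'] less.prems(1) by blast
      qed
    next
      assume h: "hd s = Y"
      have XY': "Y \<noteq> X" using less.prems(1) by simp
      have s1: "set s \<subseteq> {Y,X}" "set s' \<subseteq> {Y,X}" using less.prems(2,3) by auto
      have IH': "t = t' \<or> t = rev t'" if "length t < length s" "set t \<subseteq> {Y,X}" "set t' \<subseteq> {Y,X}"
          "\<And>w. popw t w \<longleftrightarrow> popw t' w" for t t'
      proof -
        have "set t \<subseteq> {X,Y}" "set t' \<subseteq> {X,Y}" using that(2,3) by auto
        then show "t = t' \<or> t = rev t'" using less.hyps[of t X Y t'] less.prems(1) that(1,4) by blast
      qed
      note c = core[OF IH' XY' s1 less.prems(4) False h]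
      show ?thesis using c by blast
    qed
  qed
qed

theorem mainTheorem17:
  fixes A B :: 'a and s s' :: "'a list" and m :: nat
  assumes "A \<noteq> B"
    and "length s = m" and "length s' = m"
    and "set s \<subseteq> {A, B}" and "set s' \<subseteq> {A, B}"
    and "mirrored m s s'"
  shows "s = s' \<or> s = rev s'"
proof -
  have "\<And>w. popw s w \<longleftrightarrow> popw s' w" using mirrored_popw_iff[OF assms(6,2,3)] .
  then show ?thesis by (rule mainL[OF assms(1,4,5)])
qed

end
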